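(* Let $\mathbf k=\mathbb F_q$. For $a,b\ge0$ let $\mathfrak S(a,b)$ be the set of pairs $(J,L)$ of coprime nonzero homogeneous polynomials in $\mathbf k[X,Y]$ with $\deg J=a$, $\deg L=b$, let $\mathfrak T(a,b)\subseteq\mathfrak S(a,b)$ be the subset of pairs with $X\nmid J$, and let $\mathfrak t(a,b)=|\mathfrak T(a,b)|$. Then $$\mathfrak t(a,b)=\begin{cases}(q-1)(q^{b+1}-1),&a=0,\\(q-1)^2q^{a+b},&a\neq0.\end{cases}$$ Consequently $\mathfrak t(a,b)=\mathfrak t(a-k,b+k)$ for $1\le k\le a-1$. *)

theory Defs
  imports "HOL-Computational_Algebra.Polynomial_Factorial"
begin

text \<open>Bivariate polynomials k[X,Y] are represented as k[Y][X], i.e. as 'a poly poly: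
  the outer variable is X, the inner one is Y. The monomial X^i Y^j has coefficient
  coeff (coeff P i) j.\<close>

definition homog_of_deg :: "'a::zero poly poly \<Rightarrow> nat \<Rightarrow> bool" where
  "homog_of_deg P d \<longleftrightarrow> (\<forall>i j. coeff (coeff P i) j \<noteq> 0 \<longrightarrow> i + j = d)"

definition frakS :: "nat \<Rightarrow> nat \<Rightarrow> ('a::field poly poly \<times> 'a poly poly) set" where
  "frakS a b = {(J, L). J \<noteq> 0 \<and> L \<noteq> 0 \<and> homog_of_deg J a \<and> homog_of_deg L b
                       \<and> coprime J L}"

definition frakT :: "nat \<Rightarrow> nat \<Rightarrow> ('a::field poly poly \<times> 'a poly poly) set" where
  "frakT a b = {(J, L) \<in> frakS a b. \<not> ([:0, 1:] dvd J)}"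

definition frakt :: "'a::field itself \<Rightarrow> nat \<Rightarrow> nat \<Rightarrow> nat" where
  "frakt _ a b = card (frakT a b :: ('a poly poly \<times> 'a poly poly) set)"

end

theory Submission
  imports Defs
begin


definition hom :: "nat \<Rightarrow> 'a::comm_ring_1 poly \<Rightarrow> 'a poly poly" where
  "hom d p = (\<Sum>i\<le>d. monom (monom (coeff p i) i) (d - i))"

definition dehom :: "nat \<Rightarrow> 'a::comm_ring_1 poly poly \<Rightarrow> 'a poly" where
  "dehom d P = (\<Sum>i\<le>d. monom (coeff (coeff P (d - i)) i) i)"

lemma coeff_hom: "coeff (hom d p) n = (if n \<le> d then monom (coeff p (d - n)) (d - n) else 0)"
proof -
  have "coeff (hom d p) n = (\<Sum>i\<le>d. if i = d - n \<and> n \<le> d then monom (coeff p i) i else 0)"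
    unfolding hom_def coeff_sum coeff_monom by (intro sum.cong) auto
  also have "\<dots> = (if n \<le> d then monom (coeff p (d - n)) (d - n) else 0)"
    by (cases "n \<le> d") (auto simp: sum.delta)
  finally show ?thesis .
qed

lemma coeff_coeff_hom: "coeff (coeff (hom d p) n) i = (if i + n = d then coeff p i else 0)"
  by (auto simp: coeff_hom coeff_monom)

lemma coeff_dehom: "coeff (dehom d P) i = (if i \<le> d then coeff (coeff P (d - i)) i else 0)"
  unfolding dehom_def coeff_sum coeff_monom by (auto simp: sum.delta)

lemma degree_dehom: "degree (dehom d P) \<le> d"
  by (rule degree_le) (auto simp: coeff_dehom)

lemma dehom_hom: "degree p \<le> d \<Longrightarrow> dehom d (hom d p) = p"
  by (rule poly_eqI) (auto simp: coeff_dehom coeff_coeff_hom coeff_eq_0)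

lemma homog_hom: "homog_of_deg (hom d p) d" 
  unfolding homog_of_deg_def by (auto simp: coeff_coeff_hom split: if_splits)

lemma hom_dehom: assumes "homog_of_deg P d" shows "hom d (dehom d P) = P"
proof (rule poly_eqI, rule poly_eqI)
  fix n i
  show "coeff (coeff (hom d (dehom d P)) n) i = coeff (coeff P n) i"
    using assms[unfolded homog_of_deg_def, rule_format, of n i]
    by (cases "coeff (coeff P n) i = 0") (auto simp: coeff_coeff_hom coeff_dehom)
qed

lemma hom_0 [simp]: "hom d 0 = 0"
  by (rule poly_eqI) (auto simp: coeff_hom)

lemma hom_eq_0_iff: "degree p \<le> d \<Longrightarrow> hom d p = 0 \<longleftrightarrow> p = 0"
proof
  assume "degree p \<le> d" "hom d p = 0"
  then have "p = dehom d 0" using dehom_hom[of p d] by simp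
  then show "p = 0" by (simp add: dehom_def)
qed simp

lemma hom_add: "hom d (p + r) = hom d p + hom d r"
  by (rule poly_eqI) (auto simp: coeff_hom add_monom)

lemma hom_smult: "hom d (smult c p) = smult [:c:] (hom d p)"
  by (rule poly_eqI) (auto simp: coeff_hom smult_monom)

lemma hom_pCons: "hom (Suc d) (pCons c p) = monom [:c:] (Suc d) + smult [:0,1:] (hom d p)"
proof (rule poly_eqI, rule poly_eqI)
  fix n i
  show "coeff (coeff (hom (Suc d) (pCons c p)) n) i =
        coeff (coeff (monom [:c:] (Suc d) + smult [:0, 1:] (hom d p)) n) i"
    by (cases i) (auto simp: coeff_coeff_hom coeff_monom coeff_pCons)
qed

lemma hom_const: "hom d [:c:] = monom [:c:] d"
  by (rule poly_eqI, rule poly_eqI) (auto simp: coeff_coeff_hom coeff_monom coeff_pCons split: nat.split)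

lemma hom_shift: "degree r \<le> n \<Longrightarrow> hom (m + n) r = monom 1 m * hom n r"
proof (rule poly_eqI, rule poly_eqI)
  fix k i assume "degree r \<le> n"
  then show "coeff (coeff (hom (m + n) r) k) i = coeff (coeff (monom 1 m * hom n r) k) i"
    by (auto simp: coeff_coeff_hom coeff_monom_mult coeff_eq_0)
qed

lemma hom_mult: "degree p \<le> m \<Longrightarrow> degree r \<le> n \<Longrightarrow> hom (m + n) (p * r) = hom m p * hom n r"
proof (induction p arbitrary: m)
  case 0
  then show ?case by simp
next
  case (pCons c p)
  show ?case
  proof (cases "p = 0")
    case True
    then show ?thesis using pCons
      by (simp add: hom_smult hom_shift hom_const smult_monom flip: mult_smult_left)
  next
    case False
    with pCons.prems obtain m' where m: "m = Suc m'" and dp: "degree p \<le> m'"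
      by (cases m) auto
    have "hom (m + n) (pCons c p * r) = hom (Suc m' + n) (smult c r) + hom (Suc (m' + n)) (pCons 0 (p * r))"
      by (simp add: m hom_add)
    also have "\<dots> = smult [:c:] (monom 1 (Suc m') * hom n r) + smult [:0,1:] (hom m' p * hom n r)"
      using pCons dp hom_shift[of r n "Suc m'"] by (simp add: hom_smult hom_pCons)
    also have "\<dots> = hom m (pCons c p) * hom n r"
      by (simp add: m hom_pCons distrib_right mult_smult_left smult_monom[symmetric])
         (metis mult_smult_left smult_monom mult.right_neutral)
    finally show ?thesis .
  qed
qed


lemma X_dvd_iff: "([:0,1:] :: 'a::comm_ring_1 poly) dvd P \<longleftrightarrow> coeff P 0 = 0"
  using poly_eq_0_iff_dvd[of P 0] by (simp add: poly_0_coeff_0)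

lemma coeff_hom_0: "coeff (hom d p) 0 = monom (coeff p d) d"
  by (simp add: coeff_hom)

lemma hom_one: "hom N (1::'a::comm_ring_1 poly) = [:0,1:] ^ N"
  using hom_const[of N "1::'a"] monom_altdef[of "1::'a poly" N] by (simp add: one_pCons[symmetric])

lemma X_dvd_mult: "([:0,1:] :: 'a::idom poly) dvd P * Q \<longleftrightarrow> [:0,1:] dvd P \<or> [:0,1:] dvd Q"
  by (simp add: X_dvd_iff coeff_mult_0)

lemma dvd_X_pow: "(D :: 'a::idom_divide poly) dvd [:0,1:] ^ N \<Longrightarrow> is_unit D \<or> [:0,1:] dvd D"
proof (induction N arbitrary: D)
  case 0
  then show ?case by simp
next
  case (Suc N)
  then obtain E where E: "[:0,1:] * [:0,1:] ^ N = D * E" by (auto elim!: dvdE)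
  show ?case
  proof (cases "[:0,1:] dvd D")
    case False
    have "[:0,1:] dvd D * E" by (metis E dvd_triv_left)
    with False have "[:0,1:] dvd E" using X_dvd_mult by blast
    then obtain E' where "E = [:0,1:] * E'" by (auto elim!: dvdE)
    with E have "[:0,1:] * [:0,1:] ^ N = [:0,1:] * (D * E')" by (simp add: ac_simps)
    then have "[:0,1:] ^ N = D * E'" by (subst (asm) mult_left_cancel) auto
    then have "D dvd [:0,1:] ^ N" by simp
    then show ?thesis using Suc.IH by blast
  qed simp
qed

lemma bezout_poly:
  fixes j l :: "'a::field poly"
  shows "\<exists>d u v. d = u * j + v * l \<and> d dvd j \<and> d dvd l"
proof (induction "degree l" arbitrary: j l rule: less_induct)
  case less
  show ?case
  proof (cases "l = 0")
    case True
    then show ?thesis by (rule_tac x=j in exI, rule_tac x=1 in exI) auto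
  next
    case l: False
    show ?thesis
    proof (cases "j mod l = 0")
      case True
      then show ?thesis by (rule_tac x=l in exI, rule_tac x=0 in exI, rule_tac x=1 in exI)
          (auto simp: mod_0_imp_dvd)
    next
      case False
      then have "degree (j mod l) < degree l" using l degree_mod_less' by blast
      from less[OF this, of l] obtain d u v where
        d: "d = u * l + v * (j mod l)" "d dvd l" "d dvd j mod l" by blast
      have jd: "j = j div l * l + j mod l" by simp
      have "d dvd j div l * l + j mod l" using d(2,3) by (intro dvd_add dvd_mult) auto
      then have "d dvd j" using jd by simp
      moreover have "d = v * j + (u - v * (j div l)) * l"
        using d(1) minus_div_mult_eq_mod[of j l, symmetric] by (simp add: algebra_simps)
      ultimately show ?thesis using d(2) by blast
    qed
  qed
qed

lemma coprime_bezout: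
  fixes j l :: "'a::field poly"
  assumes "coprime j l"
  obtains u v where "u * j + v * l = 1"
proof -
  obtain d u v where d: "d = u * j + v * l" "d dvd j" "d dvd l" using bezout_poly by blast
  then have "is_unit d" using assms coprime_common_divisor by blast
  then obtain w where w: "1 = d * w" by (rule dvdE)
  have "(w * u) * j + (w * v) * l = w * d" using d(1) by (simp add: algebra_simps)
  then have "(w * u) * j + (w * v) * l = 1" using w by (simp add: ac_simps)
  then show ?thesis using that by blast
qed

lemma hom_coprime_iff:
  fixes j l :: "'a::field poly"
  assumes j: "j \<noteq> 0" "degree j = a" and l: "l \<noteq> 0" "degree l \<le> b"
  shows "coprime (hom a j) (hom b l) \<longleftrightarrow> coprime j l"
proof
  assume cop: "coprime j l"
  show "coprime (hom a j) (hom b l)"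
  proof (rule coprimeI)
    fix D assume D1: "D dvd hom a j" and D2: "D dvd hom b l"
    show "is_unit D"
    proof (rule ccontr)
      assume nu: "\<not> is_unit D"
      obtain u v where uv: "u * j + v * l = 1" using coprime_bezout[OF cop] by blast
      define N where "N = degree u + degree v + b + a"
      have h1: "hom N (u * j) = hom (degree u + degree v + b) u * hom a j"
        unfolding N_def by (rule hom_mult) (use j in auto)
      have N2: "N = (degree u + degree v + a) + b" unfolding N_def by simp
      have h2: "hom N (v * l) = hom (degree u + degree v + a) v * hom b l"
        unfolding N2 by (rule hom_mult) (use l in auto)
      have "[:0,1:] ^ N = hom N (u * j + v * l)" by (simp add: uv hom_one)
      then have "[:0,1:] ^ N = hom N (u * j) + hom N (v * l)" by (simp add: hom_add)
      then have "D dvd [:0,1:] ^ N" unfolding h1 h2 using D1 D2 by simp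
      then have "[:0,1:] dvd D" using dvd_X_pow nu by blast
      then have "[:0,1:] dvd hom a j" using D1 by (meson dvd_trans)
      then have "coeff j a = 0" by (simp add: X_dvd_iff coeff_hom_0)
      with j show False by (metis leading_coeff_0_iff)
    qed
  qed
next
  assume cop: "coprime (hom a j) (hom b l)"
  show "coprime j l"
  proof (rule coprimeI)
    fix c assume "c dvd j" "c dvd l"
    then obtain g g' where g: "j = c * g" and g': "l = c * g'" by (auto elim!: dvdE)
    have nz: "c \<noteq> 0" "g \<noteq> 0" "g' \<noteq> 0" using g g' j l by auto
    have dj: "degree c + degree g = a" using g j nz by (simp add: degree_mult_eq)
    have dl: "degree c + degree g' \<le> b" using g' l nz by (simp add: degree_mult_eq)
    have "hom a j = hom (degree c) c * hom (degree g) g"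
      unfolding g dj[symmetric] by (rule hom_mult) auto
    then have d1: "hom (degree c) c dvd hom a j" by simp
    have bb: "b = degree c + (b - degree c)" using dl by simp
    have "hom b l = hom (degree c) c * hom (b - degree c) g'"
      unfolding g' by (subst bb) (rule hom_mult, use dl in auto)
    then have d2: "hom (degree c) c dvd hom b l" by simp
    have "is_unit (hom (degree c) c)" using coprime_common_divisor[OF cop d1 d2] .
    then obtain e where e: "hom (degree c) c = [:e:]" "is_unit e" using is_unit_poly_iff by blast
    have "e = monom (lead_coeff c) (degree c)" using arg_cong[OF e(1), of "\<lambda>P. coeff P 0"]
      by (simp add: coeff_hom_0)
    moreover have "e \<noteq> 0" using e(2) by auto
    ultimately have "degree e = degree c" using nz by (simp add: degree_monom_eq)
    moreover have "degree e = 0" using e(2) \<open>e \<noteq> 0\<close> is_unit_iff_degree by blast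
    ultimately show "is_unit c" using nz is_unit_iff_degree by auto
  qed
qed


definition E :: "nat \<Rightarrow> nat \<Rightarrow> ('a::field poly \<times> 'a poly) set" where
  "E a b = {(j, l). j \<noteq> 0 \<and> degree j = a \<and> l \<noteq> 0 \<and> degree l \<le> b \<and> coprime j l}"

lemma frakT_eq: "frakT a b = (\<lambda>(j, l). (hom a j, hom b l)) ` (E a b :: ('a::field poly \<times> 'a poly) set)"
proof (intro equalityI subsetI)
  fix x assume "x \<in> (frakT a b :: ('a poly poly \<times> 'a poly poly) set)"
  then obtain J L where x: "x = (J, L)" and JL: "J \<noteq> 0" "L \<noteq> 0" "homog_of_deg J a"
    "homog_of_deg L b" "coprime J L" "\<not> [:0,1:] dvd J"
    unfolding frakT_def frakS_def by auto
  define j where "j = dehom a J"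
  define l where "l = dehom b L"
  have J: "J = hom a j" unfolding j_def using hom_dehom JL by metis
  have L: "L = hom b l" unfolding l_def using hom_dehom JL by metis
  have dj: "degree j \<le> a" and dl: "degree l \<le> b" unfolding j_def l_def by (rule degree_dehom)+
  have "j \<noteq> 0" using J JL by auto
  have "l \<noteq> 0" using L JL by auto
  have "coeff j a \<noteq> 0" using JL(6) unfolding J by (simp add: X_dvd_iff coeff_hom_0)
  then have "degree j = a" using dj le_degree by (metis antisym)
  have "coprime j l" using JL(5) hom_coprime_iff[of j a l b] \<open>j \<noteq> 0\<close> \<open>degree j = a\<close> \<open>l \<noteq> 0\<close> dl J L by simp
  show "x \<in> (\<lambda>(j, l). (hom a j, hom b l)) ` E a b"
    unfolding E_def x J L using \<open>j \<noteq> 0\<close> \<open>degree j = a\<close> \<open>l \<noteq> 0\<close> dl \<open>coprime j l\<close>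
    by (intro image_eqI[of _ _ "(j, l)"]) auto
next
  fix x assume "x \<in> (\<lambda>(j, l). (hom a j, hom b l)) ` (E a b :: ('a poly \<times> 'a poly) set)"
  then obtain j l where x: "x = (hom a j, hom b l)" and jl: "j \<noteq> 0" "degree j = a" "l \<noteq> 0"
    "degree l \<le> b" "coprime j l" unfolding E_def by auto
  have "hom a j \<noteq> 0" using jl hom_eq_0_iff[of j a] by simp
  moreover have "hom b l \<noteq> 0" using jl hom_eq_0_iff[of l b] by simp
  moreover have "coprime (hom a j) (hom b l)" using hom_coprime_iff[of j a l b] jl by simp
  moreover have "\<not> [:0,1:] dvd hom a j" using jl by (simp add: X_dvd_iff coeff_hom_0) (metis leading_coeff_0_iff)
  ultimately show "x \<in> frakT a b" unfolding x frakT_def frakS_def by (auto simp: homog_hom)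
qed

lemma card_frakT: "card (frakT a b :: ('a::field poly poly \<times> 'a poly poly) set) = card (E a b :: ('a poly \<times> 'a poly) set)"
proof -
  have "inj_on (\<lambda>(j, l). (hom a j, hom b l)) (E a b :: ('a poly \<times> 'a poly) set)"
  proof (rule inj_onI, clarsimp)
    fix j l j' l' assume "(j, l) \<in> (E a b :: ('a poly \<times> 'a poly) set)" "(j', l') \<in> (E a b :: ('a poly \<times> 'a poly) set)"
      "hom a j = hom a j'" "hom b l = hom b l'"
    then have "degree j \<le> a" "degree j' \<le> a" "degree l \<le> b" "degree l' \<le> b" "hom a j = hom a j'" "hom b l = hom b l'"
      unfolding E_def by auto
    then show "j = j' \<and> l = l'" by (metis dehom_hom)
  qed
  then show ?thesis unfolding frakT_eq by (rule card_image)
qed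


lemma card_deg_le:
  "finite {p :: 'a::{field,finite} poly. degree p \<le> n} \<and> card {p :: 'a poly. degree p \<le> n} = card (UNIV :: 'a set) ^ Suc n"
proof -
  let ?L = "{xs :: 'a list. length xs = Suc n}"
  have bij: "bij_betw Poly ?L {p. degree p \<le> n}"
  proof (rule bij_betw_imageI)
    show "inj_on Poly ?L"
    proof (rule inj_onI)
      fix xs ys assume xs: "xs \<in> ?L" and ys: "ys \<in> ?L" and eq: "Poly xs = Poly ys"
      show "xs = ys"
      proof (rule nth_equalityI)
        show "length xs = length ys" using xs ys by simp
        fix i assume "i < length xs"
        then show "xs ! i = ys ! i" using arg_cong[OF eq, of "\<lambda>p. coeff p i"] xs ys
          by (simp add: nth_default_nth)
      qed
    qed
    show "Poly ` ?L = {p. degree p \<le> n}"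
    proof (intro equalityI subsetI)
      fix p assume "p \<in> Poly ` ?L"
      then obtain xs where "p = Poly xs" "length xs = Suc n" by auto
      then have "\<forall>i>n. coeff p i = 0" by (simp add: nth_default_def)
      then show "p \<in> {p. degree p \<le> n}" using degree_le by blast
    next
      fix p :: "'a poly" assume p: "p \<in> {p. degree p \<le> n}"
      have "p = Poly (map (coeff p) [0..<Suc n])"
      proof (rule poly_eqI)
        fix i show "coeff p i = coeff (Poly (map (coeff p) [0..<Suc n])) i"
        proof (cases "i < Suc n")
          case True
          then show ?thesis by (simp add: nth_default_nth del: upt_Suc)
        next
          case False
          then show ?thesis using p by (simp add: nth_default_beyond coeff_eq_0 del: upt_Suc)
        qed
      qed
      then show "p \<in> Poly ` ?L" by (rule image_eqI) simp
    qed
  qed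
  have "card ?L = card (UNIV :: 'a set) ^ Suc n" using card_lists_length_eq[of "UNIV :: 'a set" "Suc n"] by simp
  moreover have "finite ?L" using finite_lists_length_eq[of "UNIV :: 'a set" "Suc n"] by simp
  ultimately show ?thesis using bij bij_betw_finite[OF bij] bij_betw_same_card[OF bij] by simp
qed

lemma card_monic:
  "card {p :: 'a::{field,finite} poly. lead_coeff p = 1 \<and> degree p = n} = card (UNIV :: 'a set) ^ n"
proof (cases n)
  case 0
  have "{p :: 'a poly. lead_coeff p = 1 \<and> degree p = n} = {1}"
  proof (intro equalityI subsetI)
    fix p :: "'a poly" assume "p \<in> {p. lead_coeff p = 1 \<and> degree p = n}"
    then have "lead_coeff p = 1" "degree p = 0" using 0 by auto
    then have "p = [:1:]" using degree_0_id[of p] by simp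
    then show "p \<in> {1}" by (simp add: one_pCons)
  qed (use 0 in simp)
  then show ?thesis using 0 by simp
next
  case (Suc m)
  have "bij_betw (\<lambda>r. monom 1 n + r) {r :: 'a poly. degree r \<le> m} {p. lead_coeff p = 1 \<and> degree p = n}"
  proof (rule bij_betw_imageI)
    show "inj_on (\<lambda>r. monom 1 n + r) {r :: 'a poly. degree r \<le> m}" by (simp add: inj_on_def)
    show "(\<lambda>r. monom 1 n + r) ` {r :: 'a poly. degree r \<le> m} = {p. lead_coeff p = 1 \<and> degree p = n}"
    proof (intro equalityI subsetI)
      fix p :: "'a poly" assume "p \<in> (\<lambda>r. monom 1 n + r) ` {r :: 'a poly. degree r \<le> m}"
      then obtain r :: "'a poly" where p: "p = monom 1 n + r" "degree r \<le> m" by auto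
      have dr: "degree r < degree (monom (1::'a) n)" using p(2) Suc by (simp add: degree_monom_eq)
      have "degree p = n" using p(1) degree_add_eq_left[OF dr] by (simp add: degree_monom_eq)
      moreover have "coeff r n = 0" using p(2) Suc by (simp add: coeff_eq_0)
      ultimately show "p \<in> {p. lead_coeff p = 1 \<and> degree p = n}" using p(1) by simp
    next
      fix p :: "'a poly" assume p: "p \<in> {p. lead_coeff p = 1 \<and> degree p = n}"
      have "degree (p - monom 1 n) \<le> m"
      proof (rule degree_le, intro allI impI)
        fix i assume "m < i"
        show "coeff (p - monom 1 n) i = 0"
        proof (cases "i = n")
          case True
          then show ?thesis using p by (auto simp: coeff_monom)
        next
          case False
          then have "i > degree p" using p Suc \<open>m < i\<close> by simp
          then show ?thesis using False by (simp add: coeff_monom coeff_eq_0)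
        qed
      qed
      then show "p \<in> (\<lambda>r. monom 1 n + r) ` {r. degree r \<le> m}" by (intro image_eqI[of _ _ "p - monom 1 n"]) simp_all
    qed
  qed
  then have "card {r :: 'a poly. degree r \<le> m} = card {p :: 'a poly. lead_coeff p = 1 \<and> degree p = n}"
    by (rule bij_betw_same_card)
  then show ?thesis using card_deg_le[where 'a='a, of m] Suc by simp
qed

lemma card_nz_le:
  "card {p :: 'a::{field,finite} poly. p \<noteq> 0 \<and> degree p \<le> n} = card (UNIV :: 'a set) ^ Suc n - 1"
proof -
  have "{p :: 'a poly. p \<noteq> 0 \<and> degree p \<le> n} = {p. degree p \<le> n} - {0}" by auto
  then show ?thesis using card_deg_le[where 'a='a, of n] by (simp add: card_Diff_singleton)
qed

lemma card_nz_eq: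
  "card {p :: 'a::{field,finite} poly. p \<noteq> 0 \<and> degree p = n} = (card (UNIV :: 'a set) - 1) * card (UNIV :: 'a set) ^ n"
proof (cases n)
  case 0
  have "{p :: 'a poly. p \<noteq> 0 \<and> degree p = n} = {p. degree p \<le> 0} - {0}" using 0 by auto
  then show ?thesis using card_deg_le[where 'a='a, of 0] 0 by (simp add: card_Diff_singleton)
next
  case (Suc m)
  have "{p :: 'a poly. p \<noteq> 0 \<and> degree p = n} = {p. degree p \<le> n} - {p. degree p \<le> m}"
    using Suc by auto
  then have "card {p :: 'a poly. p \<noteq> 0 \<and> degree p = n} = card (UNIV :: 'a set) ^ Suc n - card (UNIV :: 'a set) ^ Suc m"
    using card_deg_le[where 'a='a, of n] card_deg_le[where 'a='a, of m] Suc by (simp add: card_Diff_subset subset_eq)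
  then show ?thesis using Suc by (simp add: diff_mult_distrib)
qed


lemma monic_dvd_antisym:
  fixes m1 m2 :: "'a::field poly"
  assumes "lead_coeff m1 = 1" "lead_coeff m2 = 1" "m1 dvd m2" "m2 dvd m1"
  shows "m1 = m2"
proof -
  obtain w where w: "m2 = m1 * w" using assms(3) by (rule dvdE)
  obtain w' where w': "m1 = m2 * w'" using assms(4) by (rule dvdE)
  have "m1 \<noteq> 0" using assms(1) by auto
  have "m1 * (w * w') = m1 * 1" by (metis w w' mult.assoc mult_1_right)
  then have "w * w' = 1" using mult_left_cancel[OF \<open>m1 \<noteq> 0\<close>] by blast
  then have "is_unit w" by (metis dvdI)
  then obtain c where c: "w = [:c:]" using is_unit_poly_iff by blast
  have "lead_coeff m2 = lead_coeff m1 * lead_coeff w" using w by (simp add: lead_coeff_mult)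
  then have "c = 1" using assms c by simp
  then show ?thesis using w c by (simp add: one_pCons[symmetric])
qed

lemma monic_eq:
  fixes m1 m2 j1 j2 l1 l2 :: "'a::field poly"
  assumes "lead_coeff m1 = 1" "lead_coeff m2 = 1" "m1 * j1 = m2 * j2" "m1 * l1 = m2 * l2"
    "coprime j1 l1" "coprime j2 l2"
  shows "m1 = m2"
proof -
  have *: "m dvd m'" if h: "m * j = m' * j'" "m * l = m' * l'" "coprime j' l'"
    for m m' j j' l l' :: "'a poly"
  proof -
    obtain u v where uv: "u * j' + v * l' = 1" using coprime_bezout[OF h(3)] by blast
    have "m' = u * (m' * j') + v * (m' * l')" using uv by (metis distrib_left mult.left_commute mult.right_neutral)
    also have "\<dots> = u * (m * j) + v * (m * l)" using h by simp
    finally show "m dvd m'" by (metis dvd_add dvd_mult dvd_triv_left)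
  qed
  show ?thesis using *[OF assms(3,4,6)] *[OF assms(3)[symmetric] assms(4)[symmetric] assms(5)] assms(1,2)
    monic_dvd_antisym by blast
qed

definition Pairs :: "nat \<Rightarrow> nat \<Rightarrow> ('a::field poly \<times> 'a poly) set" where
  "Pairs a b = {(j, l). j \<noteq> 0 \<and> degree j = a \<and> l \<noteq> 0 \<and> degree l \<le> b}"

definition Mon :: "nat \<Rightarrow> 'a::field poly set" where
  "Mon k = {p. lead_coeff p = 1 \<and> degree p = k}"

definition phi :: "'a::field poly \<times> 'a poly \<times> 'a poly \<Rightarrow> 'a poly \<times> 'a poly" where
  "phi = (\<lambda>(m, j, l). (m * j, m * l))"

lemma Pairs_decomp:
  "Pairs a b = (\<Union>k\<in>{0..min a b}. phi ` (Mon k \<times> E (a - k) (b - k)))"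
proof (intro equalityI subsetI)
  fix x assume "x \<in> Pairs a b"
  then obtain j l where x: "x = (j, l)" and jl: "j \<noteq> 0" "degree j = a" "l \<noteq> 0" "degree l \<le> b"
    unfolding Pairs_def by auto
  obtain d u v where d: "d = u * j + v * l" "d dvd j" "d dvd l" using bezout_poly by blast
  have "d \<noteq> 0" using d(2) jl(1) by auto
  define m where "m = smult (inverse (lead_coeff d)) d"
  have lm: "lead_coeff m = 1" unfolding m_def using \<open>d \<noteq> 0\<close> by simp
  have dm: "d = smult (lead_coeff d) m" unfolding m_def using \<open>d \<noteq> 0\<close> by simp
  have md: "m dvd d" by (subst dm) (rule dvd_smult, simp)
  have "m \<noteq> 0" using lm by auto
  have degm: "degree m = degree d" unfolding m_def using \<open>d \<noteq> 0\<close> by simp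
  obtain j' where j': "j = m * j'" using md d(2) by (meson dvd_trans dvdE)
  obtain l' where l': "l = m * l'" using md d(3) by (meson dvd_trans dvdE)
  have nz: "j' \<noteq> 0" "l' \<noteq> 0" using j' l' jl by auto
  define k where "k = degree m"
  have dj: "k + degree j' = a" unfolding k_def using j' jl nz \<open>m \<noteq> 0\<close> by (simp add: degree_mult_eq)
  have dl: "k + degree l' \<le> b" unfolding k_def using l' jl nz \<open>m \<noteq> 0\<close> by (simp add: degree_mult_eq)
  have cop: "coprime j' l'"
  proof (rule coprimeI)
    fix c assume "c dvd j'" "c dvd l'"
    then have "m * c dvd j" "m * c dvd l" using j' l' by auto
    then have "m * c dvd d" using d(1) by (simp add: dvd_add dvd_mult)
    also have "d dvd m" unfolding m_def by (rule dvd_smult) simp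
    finally obtain w where "m = m * c * w" by (rule dvdE)
    then have "m * (c * w) = m * 1" by (simp add: ac_simps)
    then have "c * w = 1" using mult_left_cancel[OF \<open>m \<noteq> 0\<close>] by blast
    then show "is_unit c" by (metis dvdI)
  qed
  have "k \<in> {0..min a b}" using dj dl by auto
  moreover have "x = phi (m, j', l')" unfolding x phi_def j' l' by simp
  moreover have "(m, j', l') \<in> Mon k \<times> E (a - k) (b - k)"
    unfolding Mon_def E_def using lm k_def nz dj dl cop by auto
  ultimately show "x \<in> (\<Union>k\<in>{0..min a b}. phi ` (Mon k \<times> E (a - k) (b - k)))" by blast
next
  fix x assume "x \<in> (\<Union>k\<in>{0..min a b}. phi ` (Mon k \<times> E (a - k) (b - k)))"
  then obtain k m j l where k: "k \<le> a" "k \<le> b" and x: "x = (m * j, m * l)"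
    and m: "lead_coeff m = 1" "degree m = k"
    and jl: "j \<noteq> 0" "degree j = a - k" "l \<noteq> 0" "degree l \<le> b - k"
    unfolding phi_def Mon_def E_def by auto
  have "m \<noteq> 0" using m by auto
  then show "x \<in> Pairs a b" unfolding x Pairs_def using k m jl by (auto simp: degree_mult_eq)
qed


lemma finite_E: "finite (E m n :: ('a::{field,finite} poly \<times> 'a poly) set)"
proof -
  have "E m n \<subseteq> {p :: 'a poly. degree p \<le> m} \<times> {p :: 'a poly. degree p \<le> n}"
    unfolding E_def by auto
  moreover have "finite ({p :: 'a poly. degree p \<le> m} \<times> {p :: 'a poly. degree p \<le> n})"
    using card_deg_le[where 'a='a, of m] card_deg_le[where 'a='a, of n] by simp
  ultimately show ?thesis by (rule finite_subset)
qed

lemma finite_Mon: "finite (Mon k :: 'a::{field,finite} poly set)"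
proof -
  have "Mon k \<subseteq> {p :: 'a poly. degree p \<le> k}" unfolding Mon_def by auto
  then show ?thesis using card_deg_le[where 'a='a, of k] finite_subset by blast
qed

lemma phi_eqD:
  assumes "phi (m1, j1, l1) = phi (m2, j2, l2)" "(m1, j1, l1) \<in> Mon k1 \<times> E a1 b1"
    "(m2, j2, l2) \<in> Mon k2 \<times> E a2 b2"
  shows "m1 = m2 \<and> j1 = j2 \<and> l1 = l2"
proof -
  have h: "m1 * j1 = m2 * j2" "m1 * l1 = m2 * l2" using assms(1) unfolding phi_def by auto
  have "m1 = m2" using assms(2,3) h monic_eq[OF _ _ h] unfolding Mon_def E_def by auto
  moreover have "m1 \<noteq> 0" using assms(2) unfolding Mon_def by auto
  ultimately show ?thesis using h by auto
qed

lemma card_Pairs_sum: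
  "card (Pairs a b :: ('a::{field,finite} poly \<times> 'a poly) set) =
     (\<Sum>k=0..min a b. card (UNIV :: 'a set) ^ k * card (E (a - k) (b - k) :: ('a poly \<times> 'a poly) set))"
proof -
  let ?A = "\<lambda>k. phi ` (Mon k \<times> E (a - k) (b - k)) :: ('a poly \<times> 'a poly) set"
  have "card (Pairs a b :: ('a poly \<times> 'a poly) set) = card (\<Union>k\<in>{0..min a b}. ?A k)"
    by (simp add: Pairs_decomp)
  also have "\<dots> = (\<Sum>k=0..min a b. card (?A k))"
  proof (rule card_UN_disjoint)
    show "\<forall>k\<in>{0..min a b}. finite (?A k)" using finite_Mon finite_E by blast
    show "\<forall>i\<in>{0..min a b}. \<forall>j\<in>{0..min a b}. i \<noteq> j \<longrightarrow> ?A i \<inter> ?A j = {}"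
    proof (intro ballI impI)
      fix i j :: nat assume "i \<noteq> j"
      show "?A i \<inter> ?A j = {}"
      proof (rule ccontr)
        assume "?A i \<inter> ?A j \<noteq> {}"
        then obtain z where z: "z \<in> ?A i" "z \<in> ?A j" by blast
        from z(1) obtain x where x: "x \<in> Mon i \<times> E (a - i) (b - i)" and zx: "z = phi x" by (rule imageE)
        from z(2) obtain y where y: "y \<in> Mon j \<times> E (a - j) (b - j)" and zy: "z = phi y" by (rule imageE)
        have "phi x = phi y" using zx zy by simp
        then have "fst x = fst y" using x y using phi_eqD[of "fst x" "fst (snd x)" "snd (snd x)" "fst y" "fst (snd y)" "snd (snd y)"]
          by (metis prod.collapse)
        then show False using x y \<open>i \<noteq> j\<close> unfolding Mon_def by auto
      qed
    qed
  qed simp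
  also have "\<dots> = (\<Sum>k=0..min a b. card (UNIV :: 'a set) ^ k * card (E (a - k) (b - k) :: ('a poly \<times> 'a poly) set))"
  proof (rule sum.cong)
    fix k assume "k \<in> {0..min a b}"
    have "inj_on phi (Mon k \<times> E (a - k) (b - k) :: ('a poly \<times> 'a poly \<times> 'a poly) set)"
    proof (rule inj_onI)
      fix x y assume "x \<in> (Mon k \<times> E (a - k) (b - k) :: ('a poly \<times> 'a poly \<times> 'a poly) set)"
        "y \<in> (Mon k \<times> E (a - k) (b - k) :: ('a poly \<times> 'a poly \<times> 'a poly) set)" "phi x = phi y"
      then show "x = y" using phi_eqD[of "fst x" "fst (snd x)" "snd (snd x)" "fst y" "fst (snd y)" "snd (snd y)"]
        by (metis prod.collapse)
    qed
    then have "card (?A k) = card (Mon k :: 'a poly set) * card (E (a - k) (b - k) :: ('a poly \<times> 'a poly) set)"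
      by (simp add: card_image card_cartesian_product)
    then show "card (?A k) = card (UNIV :: 'a set) ^ k * card (E (a - k) (b - k) :: ('a poly \<times> 'a poly) set)"
      using card_monic[where 'a='a, of k] unfolding Mon_def by simp
  qed simp
  finally show ?thesis .
qed

lemma card_Pairs:
  "card (Pairs a b :: ('a::{field,finite} poly \<times> 'a poly) set) =
     (card (UNIV :: 'a set) - 1) * card (UNIV :: 'a set) ^ a * (card (UNIV :: 'a set) ^ Suc b - 1)"
proof -
  have "(Pairs a b :: ('a poly \<times> 'a poly) set) = {p. p \<noteq> 0 \<and> degree p = a} \<times> {p. p \<noteq> 0 \<and> degree p \<le> b}"
    unfolding Pairs_def by auto
  then show ?thesis using card_nz_eq[where 'a='a, of a] card_nz_le[where 'a='a, of b]
    by (simp add: card_cartesian_product)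
qed

lemma E_0: "(E 0 b :: ('a::field poly \<times> 'a poly) set) = Pairs 0 b"
proof -
  have "coprime j l" if "j \<noteq> 0" "degree j = 0" for j l :: "'a poly"
    using that is_unit_iff_degree is_unit_left_imp_coprime by blast
  then show ?thesis unfolding E_def Pairs_def by auto
qed


lemma card_E_0: "card (E 0 b :: ('a::{field,finite} poly \<times> 'a poly) set) =
  (card (UNIV :: 'a set) - 1) * (card (UNIV :: 'a set) ^ Suc b - 1)"
  using card_Pairs[where 'a='a, of 0 b] by (simp add: E_0)

lemma card_E_pos:
  assumes "a \<noteq> 0"
  shows "card (E a b :: ('a::{field,finite} poly \<times> 'a poly) set) =
    (card (UNIV :: 'a set) - 1)^2 * card (UNIV :: 'a set) ^ (a + b)"
proof -
  define q where "q = card (UNIV :: 'a set)"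
  have q1: "q \<ge> 1" unfolding q_def by (simp add: Suc_le_eq finite_UNIV_card_ge_0)
  define t where "t = (\<lambda>m n. card (E m n :: ('a poly \<times> 'a poly) set))"
  define P where "P = (\<lambda>m n. (q - 1) * q ^ m * (q ^ Suc n - 1))"
  have S: "P m n = (\<Sum>k=0..min m n. q ^ k * t (m - k) (n - k))" for m n
    using card_Pairs_sum[where 'a='a, of m n] card_Pairs[where 'a='a, of m n]
    unfolding P_def t_def q_def by simp
  have intP: "int (P m n) = (int q - 1) * int q ^ m * (int q ^ Suc n - 1)" for m n
    unfolding P_def using q1 by (simp add: of_nat_diff one_le_power)
  show ?thesis
  proof (cases b)
    case 0
    have "P a 0 = t a 0" using S[of a 0] by simp
    then have "int (t a 0) = (int q - 1) * int q ^ a * (int q - 1)" using intP[of a 0] by simp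
    then have "int (t a 0) = int ((q - 1)^2 * q ^ a)" using q1 by (simp add: of_nat_diff power2_eq_square)
    then show ?thesis using 0 unfolding t_def q_def by (simp only: of_nat_eq_iff) simp
  next
    case (Suc b')
    obtain a' where a: "a = Suc a'" using assms by (cases a) auto
    have "P a b = (\<Sum>k=0..Suc (min a' b'). q ^ k * t (a - k) (b - k))"
      using S[of a b] a Suc by simp
    also have "\<dots> = t a b + (\<Sum>k=0..min a' b'. q ^ Suc k * t (a - Suc k) (b - Suc k))"
      by (subst sum.atLeast0_atMost_Suc_shift) simp
    also have "(\<Sum>k=0..min a' b'. q ^ Suc k * t (a - Suc k) (b - Suc k)) = q * P a' b'"
      using S[of a' b'] a Suc by (simp add: sum_distrib_left mult.assoc)
    finally have "P a b = t a b + q * P a' b'" .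
    then have "int (t a b) = int (P a b) - int q * int (P a' b')" by simp
    also have "\<dots> = (int q - 1) * int q ^ Suc a' * (int q ^ Suc (Suc b') - 1)
                   - int q * ((int q - 1) * int q ^ a' * (int q ^ Suc b' - 1))"
      using intP[of a b] intP[of a' b'] a Suc by simp
    also have "\<dots> = (int q - 1)^2 * int q ^ (a' + b' + 2)"
      by (simp add: algebra_simps power_add power2_eq_square)
    also have "\<dots> = int ((q - 1)^2 * q ^ (a + b))" using q1 a Suc by (simp add: of_nat_diff)
    finally show ?thesis unfolding t_def q_def by (simp only: of_nat_eq_iff)
  qed
qed


theorem mainTheorem7:
  fixes q :: nat and T :: "'a::{field,finite} itself"
  assumes "card (UNIV :: 'a set) = q"
  shows "frakt T a b =
           (if a = 0 then (q - 1) * (q ^ (b + 1) - 1) else (q - 1)^2 * q ^ (a + b))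
         \<and> (\<forall>k. 1 \<le> k \<and> k \<le> a - 1 \<longrightarrow> frakt T a b = frakt T (a - k) (b + k))"
proof -
  have f: "frakt T m n = card (E m n :: ('a poly \<times> 'a poly) set)" for m n
    unfolding frakt_def by (rule card_frakT)
  have F: "frakt T m n = (if m = 0 then (q - 1) * (q ^ (n + 1) - 1) else (q - 1)^2 * q ^ (m + n))" for m n
    using f card_E_0[where 'a='a, of n] card_E_pos[where 'a='a, of m n] assms by auto
  show ?thesis
  proof
    show "frakt T a b = (if a = 0 then (q - 1) * (q ^ (b + 1) - 1) else (q - 1)^2 * q ^ (a + b))"
      by (rule F)
    show "\<forall>k. 1 \<le> k \<and> k \<le> a - 1 \<longrightarrow> frakt T a b = frakt T (a - k) (b + k)"
    proof (intro allI impI)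
      fix k assume k: "1 \<le> k \<and> k \<le> a - 1"
      then have "a \<noteq> 0" "a - k \<noteq> 0" "a - k + (b + k) = a + b" by auto
      then show "frakt T a b = frakt T (a - k) (b + k)" using F[of a b] F[of "a - k" "b + k"] by simp
    qed
  qed
qed

end
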